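(* Fix $L\ge1$. (a) $(2^\omega,(g^L_n|_{\mathbb{D}^L_n})_{n\in\omega})$ is a strongly complex situation. (b) If $s\in\omega^{<\omega}$ is strictly increasing with $2\le|s|\le L$, $\alpha\in\mathbb{D}^L_{s(|s|-1)}$, and $g_s(\alpha)$, $g_{s^-}(\alpha)$ are both defined, then $g_s(\alpha)\ne g_{s^-}(\alpha)$. (c) If $s\in\omega^{<\omega}$ is strictly increasing with $|s|=L+1$ and $g_s(\alpha)$, $g_{s^-}(\alpha)$ are both defined, then $g_s(\alpha)=g_{s^-}(\alpha)$.
   Context: Let $\psi:\omega\to2^{<\omega}$ enumerate finite binary sequences by length then lexicographically. Let $q_0=0$, $q_{n+1}=3\cdot2^{q_n}$, $t_n:=\psi(n)0^{2^{q_n}-|\psi(n)|}$, $S_n:=\{2^{q_n}j:j\ge1\}$, $N_t=\{\alpha\in 2^\omega:t\subseteq\alpha\}$. Define $\theta$ on $\{j\ge1\}$ depending on $L$: if $L=1$, $\theta(j)=2j+1$; if $L\ge2$, with $P_L:=\{2^p3^l:p\in\omega,l<L-2\}$ and $M_L:=\{2^{31}\cdot3\cdot k:k\ge1,k\notin P_L\}$, $\theta(j)=3j$ if $j\notin M_L\cup(M_L+1)$, $3j+3$ if $j\in M_L$, $3j-3$ if $j\in M_L+1$. Let $\theta_n(k)=k$ for $k\notin S_n$ and $\theta_n(2^{q_n}j)=2^{q_n}\theta(j)$. Define $g_n=g^L_n:N_{t_n0}\to N_{t_n1}$ by $g_n(\alpha)(k)=1$ if $k=2^{q_n}$, $g_n(\alpha)(k)=\alpha(\theta_n(k))$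 otherwise. Let $\mathbb{D}^1_n:=N_{t_n0}$ and for $L\ge2$, $\mathbb{D}^L_n:=\{\alpha\in N_{t_n0}:\forall m\le n\ \alpha(2^{q_n}3^m)\ne\alpha(2^{q_n}3^{m+1})\}$. For $s\in\omega^{<\omega}$ nonempty, $g_s:=g_{s(0)}\circ\dots\circ g_{s(|s|-1)}$ (partial composition) and $s^-:=(s(0),\dots,s(|s|-2))$. A strongly complex situation is $(X,(f_n))$ with $X$ a nonempty zero-dimensional perfect Polish space, each $f_n$ a partial continuous open map with clopen domain and range, $\Delta(X)\subseteq\overline{\bigcup_n\mathrm{Graph}(f_n)}\setminus\bigcup_n\mathrm{Graph}(f_n)$, and the restriction of any $f_n$ to any nonempty open subset of its domain not countable-to-one. *)

theory Defs
  imports "HOL-Analysis.Analysis"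
begin

definition Polish_space :: "'a topology \<Rightarrow> bool" where
  "Polish_space X \<longleftrightarrow> completely_metrizable_space X \<and> separable_space X"

definition perfect_top :: "'a topology \<Rightarrow> bool" where
  "perfect_top X \<longleftrightarrow> X derived_set_of topspace X = topspace X"

text \<open>A partial map on X given by its domain D and a function f (relevant on D only):
  continuous and open, with clopen domain and clopen range.\<close>
definition partial_cont_open_map :: "'a topology \<Rightarrow> 'a set \<Rightarrow> ('a \<Rightarrow> 'a) \<Rightarrow> bool" where
  "partial_cont_open_map X D f \<longleftrightarrow>
     closedin X D \<and> openin X D \<and>
     closedin X (f ` D) \<and> openin X (f ` D) \<and>
     continuous_map (subtopology X D) X f \<and>
     open_map (subtopology X D) X f"

definition graph_on :: "'a set \<Rightarrow> ('a \<Rightarrow> 'a) \<Rightarrow> ('a \<times> 'a) set" where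
  "graph_on D f = {(x, f x) | x. x \<in> D}"

definition strongly_complex_situation ::
    "'a topology \<Rightarrow> (nat \<Rightarrow> 'a set) \<Rightarrow> (nat \<Rightarrow> 'a \<Rightarrow> 'a) \<Rightarrow> bool" where
  "strongly_complex_situation X D f \<longleftrightarrow>
     topspace X \<noteq> {} \<and> X dim_le 0 \<and> perfect_top X \<and> Polish_space X \<and>
     (\<forall>n. partial_cont_open_map X (D n) (f n)) \<and>
     (\<lambda>x. (x, x)) ` topspace X \<subseteq>
        (prod_topology X X) closure_of (\<Union>n. graph_on (D n) (f n)) - (\<Union>n. graph_on (D n) (f n)) \<and>
     (\<forall>n U. openin X U \<and> U \<noteq> {} \<and> U \<subseteq> D n \<longrightarrow>
        \<not> (\<forall>y. countable {x \<in> U. f n x = y}))"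

definition cantor :: "(nat \<Rightarrow> bool) topology" where
  "cantor = product_topology (\<lambda>_. discrete_topology UNIV) UNIV"

text \<open>Basic clopen set N_t; True = 1, False = 0.\<close>
definition Nbhd :: "bool list \<Rightarrow> (nat \<Rightarrow> bool) set" where
  "Nbhd t = {\<alpha>. \<forall>i < length t. \<alpha> i = t ! i}"

fun bin_tail :: "nat \<Rightarrow> bool list" where
  "bin_tail m = (if m \<le> 1 then [] else bin_tail (m div 2) @ [odd m])"

text \<open>psi enumerates finite binary sequences by length, then lexicographically:
  psi n is the binary expansion of n+1 with its leading 1 removed.\<close>
definition psi :: "nat \<Rightarrow> bool list" where
  "psi n = bin_tail (Suc n)"

fun q :: "nat \<Rightarrow> nat" where
  "q 0 = 0"
| "q (Suc n) = 3 * 2 ^ q n"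

definition tt :: "nat \<Rightarrow> bool list" where
  "tt n = psi n @ replicate (2 ^ q n - length (psi n)) False"

definition S :: "nat \<Rightarrow> nat set" where
  "S n = {2 ^ q n * j | j. j \<ge> 1}"

definition P :: "nat \<Rightarrow> nat set" where
  "P L = {2 ^ p * 3 ^ l | p l. l < L - 2}"

definition M :: "nat \<Rightarrow> nat set" where
  "M L = {2 ^ 31 * 3 * k | k. k \<ge> 1 \<and> k \<notin> P L}"

definition theta :: "nat \<Rightarrow> nat \<Rightarrow> nat" where
  "theta L j =
     (if L = 1 then 2 * j + 1
      else if j \<in> M L then 3 * j + 3
      else if j \<in> (\<lambda>m. m + 1) ` M L then 3 * j - 3
      else 3 * j)"

definition theta_n :: "nat \<Rightarrow> nat \<Rightarrow> nat \<Rightarrow> nat" where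
  "theta_n L n k = (if k \<in> S n then 2 ^ q n * theta L (k div 2 ^ q n) else k)"

text \<open>g^L_n, as a total function; its domain is Nbhd (tt n @ [False]).\<close>
definition g :: "nat \<Rightarrow> nat \<Rightarrow> (nat \<Rightarrow> bool) \<Rightarrow> (nat \<Rightarrow> bool)" where
  "g L n \<alpha> = (\<lambda>k. if k = 2 ^ q n then True else \<alpha> (theta_n L n k))"

definition D :: "nat \<Rightarrow> nat \<Rightarrow> (nat \<Rightarrow> bool) set" where
  "D L n = (if L = 1 then Nbhd (tt n @ [False])
            else {\<alpha> \<in> Nbhd (tt n @ [False]).
                    \<forall>m \<le> n. \<alpha> (2 ^ q n * 3 ^ m) \<noteq> \<alpha> (2 ^ q n * 3 ^ Suc m)})"

text \<open>g_n as a partial map with domain N_{t_n 0}.\<close>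
definition g_part :: "nat \<Rightarrow> nat \<Rightarrow> (nat \<Rightarrow> bool) \<Rightarrow> (nat \<Rightarrow> bool) option" where
  "g_part L n \<alpha> = (if \<alpha> \<in> Nbhd (tt n @ [False]) then Some (g L n \<alpha>) else None)"

text \<open>g_s = g_{s(0)} o ... o g_{s(|s|-1)} (partial composition; g_{s(|s|-1)} applied first).\<close>
definition g_seq :: "nat \<Rightarrow> nat list \<Rightarrow> (nat \<Rightarrow> bool) \<Rightarrow> (nat \<Rightarrow> bool) option" where
  "g_seq L s \<alpha> = foldr (\<lambda>n acc. Option.bind acc (g_part L n)) s (Some \<alpha>)"

end

theory Submission
  imports Defs
begin


fun rd :: "nat \<Rightarrow> nat list \<Rightarrow> nat \<Rightarrow> nat option" where
  "rd L [] k = Some k"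
| "rd L (a#s) k = (if k = 2 ^ q a then None else rd L s (theta_n L a k))"

lemma g_seq_Cons: "g_seq L (a#s) \<alpha> = Option.bind (g_seq L s \<alpha>) (g_part L a)"
  by (simp add: g_seq_def)

lemma g_seq_Nil: "g_seq L [] \<alpha> = Some \<alpha>"
  by (simp add: g_seq_def)

lemma g_seq_rd: "g_seq L s \<gamma> = Some \<beta> \<Longrightarrow> \<beta> k = (case rd L s k of None \<Rightarrow> True | Some p \<Rightarrow> \<gamma> p)"
proof (induction s arbitrary: \<beta> k)
  case Nil
  then show ?case by (simp add: g_seq_Nil)
next
  case (Cons a s)
  from Cons.prems obtain \<delta> where d: "g_seq L s \<gamma> = Some \<delta>" "g_part L a \<delta> = Some \<beta>"
    by (auto simp: g_seq_Cons split: Option.bind_splits)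
  then have b: "\<beta> = g L a \<delta>" by (auto simp: g_part_def split: if_splits)
  show ?case using Cons.IH[OF d(1)] by (simp add: b g_def)
qed

lemma rd_snoc: "rd L (s@[c]) k = (case rd L s k of None \<Rightarrow> None | Some p \<Rightarrow> rd L [c] p)"
  by (induction s arbitrary: k) auto

lemma q_Suc_gt: "q n < q (Suc n)"
proof -
  have "q n < 2 ^ q n" by simp
  moreover have "(2::nat) ^ q n \<le> 3 * 2 ^ q n" by simp
  ultimately show ?thesis by (simp only: q.simps; linarith)
qed

lemma q_strict: "a < b \<Longrightarrow> q a < q b"
  using strict_monoD[OF strict_monoI_Suc[of q, OF q_Suc_gt]] by blast

lemma q_mono: "a \<le> b \<Longrightarrow> q a \<le> q b"
  by (metis le_less q_strict)

lemma S_mem: "x \<in> S n \<longleftrightarrow> x \<noteq> 0 \<and> 2 ^ q n dvd x"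
  unfolding S_def by (auto elim!: dvdE) 

lemma S_sub: "a \<le> b \<Longrightarrow> S b \<subseteq> S a"
  by (auto simp: S_mem) (metis dvd_trans le_imp_power_dvd q_mono)

lemma theta_n_S: "k \<in> S n \<Longrightarrow> theta_n L n k = 2 ^ q n * theta L (k div 2 ^ q n)"
  by (simp add: theta_n_def)

lemma theta_n_nS: "k \<notin> S n \<Longrightarrow> theta_n L n k = k"
  by (simp add: theta_n_def)

lemma M_dvd: "m \<in> M L \<Longrightarrow> 2 dvd m \<and> 3 dvd m"
  unfolding M_def by auto

lemma theta_M: "L \<noteq> 1 \<Longrightarrow> j \<in> M L \<Longrightarrow> theta L j = 3 * j + 3"
  by (simp add: theta_def)

lemma theta_M1: "L \<noteq> 1 \<Longrightarrow> j \<notin> M L \<Longrightarrow> j - 1 \<in> M L \<Longrightarrow> j \<ge> 1 \<Longrightarrow> theta L j = 3 * j - 3"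
  unfolding theta_def by (auto simp: image_iff)

lemma theta_gen: "L \<noteq> 1 \<Longrightarrow> j \<notin> M L \<Longrightarrow> (j = 0 \<or> j - 1 \<notin> M L) \<Longrightarrow> theta L j = 3 * j"
  unfolding theta_def by (auto simp: image_iff)

lemma two_pow_cancel: "2 ^ (x + 1) dvd (2::nat) ^ x * y \<Longrightarrow> 2 dvd y"
  by (simp add: power_add mult.commute)

lemma three_dvd_pow2: "(3::nat) dvd 2 ^ x * y \<Longrightarrow> 3 dvd y"
proof -
  assume a: "(3::nat) dvd 2 ^ x * y"
  have "prime (3::nat)" by simp
  moreover have "\<not> (3::nat) dvd 2 ^ x"
    using prime_dvd_power[of "3::nat" 2 x] by auto
  ultimately show ?thesis using a prime_dvd_mult_iff by blast
qed

lemma S_decomp: "k \<in> S n \<Longrightarrow> k = 2 ^ q n * (k div 2 ^ q n) \<and> k div 2 ^ q n \<ge> 1"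
  by (auto simp: S_mem)

lemma S_pow_odd: "q c < q a \<Longrightarrow> 2 ^ q c * y \<in> S a \<Longrightarrow> even y"
proof -
  assume h: "q c < q a" "2 ^ q c * y \<in> S a"
  have "(2::nat) ^ (q c + 1) dvd 2 ^ q a" using h(1) by (intro le_imp_power_dvd) simp
  moreover have "2 ^ q a dvd 2 ^ q c * y" using h(2) by (simp add: S_mem)
  ultimately have "2 ^ (q c + 1) dvd 2 ^ q c * y"
    using dvd_trans by blast
  then show ?thesis by (rule two_pow_cancel)
qed

lemma R3:
  assumes L2: "L \<ge> 2"
  shows "sorted_wrt (<) s \<Longrightarrow> (\<forall>x\<in>set s. x < a) \<Longrightarrow> rd L s k = Some k' \<Longrightarrow> k' \<in> S a
     \<Longrightarrow> 3 ^ length s dvd k'"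
proof (induction s arbitrary: a k' rule: rev_induct)
  case Nil
  then show ?case by simp
next
  case (snoc c s)
  have srt: "sorted_wrt (<) s" and lt: "\<forall>x\<in>set s. x < c" and ca: "c < a"
    using snoc.prems(1,2) by (auto simp: sorted_wrt_append)
  obtain k'' where r: "rd L s k = Some k''" and r2: "rd L [c] k'' = Some k'"
    using snoc.prems(3) by (auto simp: rd_snoc split: option.splits)
  have kne: "k'' \<noteq> 2 ^ q c" and kk: "k' = theta_n L c k''"
    using r2 by (auto split: if_splits)
  have qca: "q c < q a" using ca q_strict by blast
  have kS: "k'' \<in> S c"
  proof (rule ccontr)
    assume "k'' \<notin> S c"
    then have "k' = k''" using kk theta_n_nS by simp
    then show False using snoc.prems(4) S_sub[of c a] ca \<open>k'' \<notin> S c\<close> by auto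
  qed
  have IH: "3 ^ length s dvd k''" using snoc.IH[OF srt lt r kS] .
  define j where "j = k'' div 2 ^ q c"
  have kj: "k'' = 2 ^ q c * j" and j1: "j \<ge> 1" using S_decomp[OF kS] j_def by auto
  have k'j: "k' = 2 ^ q c * theta L j" using kk theta_n_S[OF kS] j_def by simp
  have L1: "L \<noteq> 1" using L2 by simp
  show ?case
  proof (cases "j \<in> M L")
    case True
    then have "theta L j = 3 * j + 3" using theta_M L1 by simp
    moreover have "even j" using M_dvd True by blast
    moreover have "even (theta L j)" using S_pow_odd[OF qca] snoc.prems(4) k'j by simp
    ultimately show ?thesis by simp
  next
    case nM: False
    show ?thesis
    proof (cases "j - 1 \<in> M L")
      case True
      then have th: "theta L j = 3 * j - 3" using theta_M1[OF L1 nM True j1] by simp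
      show ?thesis
      proof (cases "length s = 0")
        case True
        have "3 * j - 3 = 3 * (j - 1)" by simp
        then show ?thesis using True k'j th by simp
      next
        case False
        then have "3 dvd k''" using IH by (meson dvd_power dvd_trans gr0I)
        then have "3 dvd j" using three_dvd_pow2[of "q c" j] kj by metis
        moreover have "3 dvd j - 1" using M_dvd True by blast
        ultimately have "3 dvd j - (j - 1)" by (rule dvd_diff_nat)
        moreover have "j - (j - 1) = 1" using j1 by simp
        ultimately show ?thesis by simp
      qed
    next
      case False
      then have "theta L j = 3 * j" using theta_gen[OF L1 nM] by simp
      then have "k' = 3 * k''" using k'j kj by simp
      then show ?thesis using IH by simp
    qed
  qed
qed




lemma three_pow_dvd_pow2: "(3::nat) ^ m dvd 2 ^ x * y \<Longrightarrow> 3 ^ m dvd y"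
proof -
  assume a: "(3::nat) ^ m dvd 2 ^ x * y"
  have "coprime ((3::nat) ^ m) (2 ^ x)" by simp
  then show ?thesis using a coprime_dvd_mult_right_iff by blast
qed

lemma two_pow_dvd_pow3: "(2::nat) ^ m dvd 3 ^ x * y \<Longrightarrow> 2 ^ m dvd y"
proof -
  assume a: "(2::nat) ^ m dvd 3 ^ x * y"
  have "coprime ((2::nat) ^ m) (3 ^ x)" by simp
  then show ?thesis using a coprime_dvd_mult_right_iff by blast
qed

lemma len_le: "sorted_wrt (<) (s @ [a]) \<Longrightarrow> length s \<le> (a::nat)"
proof -
  assume h: "sorted_wrt (<) (s @ [a])"
  then have "distinct s" by (simp add: sorted_wrt_append strict_sorted_iff)
  then have "length s = card (set s)" by (simp add: distinct_card)
  also have "\<dots> \<le> card {..<a}" 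
    using h by (intro card_mono) (auto simp: sorted_wrt_append)
  finally show ?thesis by simp
qed

lemma lemA:
  assumes L2: "L \<ge> 2"
  shows "(\<forall>x\<in>set s. x < b) \<Longrightarrow> c + length s \<le> L - 1 \<Longrightarrow>
    rd L s (2 ^ q b * 3 ^ c) = Some (2 ^ q b * 3 ^ (c + length s))"
proof (induction s arbitrary: c)
  case Nil
  then show ?case by simp
next
  case (Cons a s)
  have ab: "a < b" using Cons.prems by simp
  then have qab: "q a < q b" by (rule q_strict)
  define e where "e = q b - q a"
  have e1: "e \<ge> 1" and qb: "q b = q a + e" using qab e_def by auto
  define k where "k = (2::nat) ^ q b * 3 ^ c"
  define j where "j = (2::nat) ^ e * 3 ^ c"
  have kj: "k = 2 ^ q a * j" by (simp add: k_def j_def qb power_add)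
  have "(2::nat) ^ q a < 2 ^ q b" using qab by simp
  also have "\<dots> \<le> k" by (simp add: k_def)
  finally have kne: "k \<noteq> 2 ^ q a" by simp
  have j1: "j \<ge> 1" by (simp add: j_def)
  have kS: "k \<in> S a" using j1 by (simp add: S_mem kj)
  have jdiv: "k div 2 ^ q a = j" by (simp add: kj)
  have L1: "L \<noteq> 1" using L2 by simp
  have jev: "even j" using e1 by (simp add: j_def)
  have nM: "j \<notin> M L"
  proof
    assume "j \<in> M L"
    then obtain \<kappa> where jk: "j = 2 ^ 31 * 3 * \<kappa>" and k1: "\<kappa> \<ge> 1" and kP: "\<kappa> \<notin> P L"
      unfolding M_def by auto
    have "3 dvd j" using jk by simp
    then have "(3::nat) dvd 2 ^ e * 3 ^ c" by (simp add: j_def)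
    then have "3 dvd (3::nat) ^ c" using three_dvd_pow2 by blast
    then have c1: "c \<ge> 1" by (cases c) auto
    have "2 ^ 31 dvd j" using jk by simp
    then have "(2::nat) ^ 31 dvd 3 ^ c * 2 ^ e" by (simp add: j_def mult.commute)
    then have "(2::nat) ^ 31 dvd 2 ^ e" using two_pow_dvd_pow3 by blast
    then have e31: "31 \<le> e" using power_dvd_imp_le by fastforce
    have "2 ^ 31 * 3 * \<kappa> = 2 ^ 31 * 3 * (2 ^ (e - 31) * 3 ^ (c - 1))"
    proof -
      have "(2::nat) ^ e = 2 ^ 31 * 2 ^ (e - 31)" using e31 by (metis le_add_diff_inverse power_add)
      moreover have "(3::nat) ^ c = 3 * 3 ^ (c - 1)" using c1 by (metis Suc_diff_1 less_le_trans power_Suc zero_less_one)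
      ultimately show ?thesis using jk j_def by simp
    qed
    then have "\<kappa> = 2 ^ (e - 31) * 3 ^ (c - 1)" by simp
    moreover have "c - 1 < L - 2" using Cons.prems(2) c1 by simp
    ultimately have "\<kappa> \<in> P L" unfolding P_def by blast
    then show False using kP by simp
  qed
  have nM1: "j - 1 \<notin> M L"
  proof
    assume "j - 1 \<in> M L"
    then have "even (j - 1)" using M_dvd by blast
    then show False using jev j1 by presburger
  qed
  have th: "theta L j = 3 * j" using theta_gen[OF L1 nM] nM1 by simp
  have "theta_n L a k = 2 ^ q b * 3 ^ (c + 1)"
    using theta_n_S[OF kS] jdiv th by (simp add: j_def qb power_add)
  moreover have "c + 1 + length s \<le> L - 1" using Cons.prems(2) by simp
  ultimately show ?case using Cons.IH[of "c + 1"] Cons.prems(1) kne k_def by simp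
qed

lemma q1: "q 1 = 3" using q.simps(2)[of 0] by simp
lemma q2: "q 2 = 24"
proof -
  have "q 2 = q (Suc 1)" by (simp only: Suc_1)
  also have "\<dots> = 3 * 2 ^ q 1" by (rule q.simps(2))
  finally show ?thesis using q1 by simp
qed
lemma q3: "q 3 \<ge> 34"
proof -
  have "q 3 = q (Suc 2)" by (simp only: numeral_3_eq_3 numeral_2_eq_2)
  also have "\<dots> = 3 * 2 ^ q 2" by (rule q.simps(2))
  finally have "q 3 = 3 * 2 ^ 24" using q2 by simp
  then show ?thesis by simp
qed

lemma q_gap: assumes "1 \<le> a" "a < b" "q b - q a < 31" shows "a = 1 \<and> b = 2"
proof (rule ccontr)
  assume nn: "\<not> (a = 1 \<and> b = 2)"
  show False
  proof (cases "a = 1")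
    case True
    then have "b \<ge> 3" using nn assms by auto
    then have "q b \<ge> q 3" by (rule q_mono)
    then show ?thesis using assms(3) True q1 q3 by simp
  next
    case False
    then have a2: "a \<ge> 2" using assms by simp
    then have "q a \<ge> 24" using q_mono[OF a2] q2 by simp
    have "q a < 2 ^ q a" by simp
    then have "q a + 31 \<le> 3 * 2 ^ q a" using \<open>q a \<ge> 24\<close> by linarith
    moreover have "q (Suc a) \<le> q b" using assms(2) q_mono[of "Suc a" b] by (simp del: q.simps)
    ultimately show ?thesis using assms(3) by simp
  qed
qed

lemma lemC:
  assumes L2: "L \<ge> 2" and srt: "sorted_wrt (<) (s @ [a])" and len: "length (s @ [a]) = L"
    and ab: "a < b" and r: "rd L (s @ [a]) k = Some p" and pS: "p \<in> S b"
  shows "L = 2 \<and> s = [0] \<and> a = 1 \<and> b = 2"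
proof -
  obtain k' where r1: "rd L s k = Some k'" and r2: "rd L [a] k' = Some p"
    using r by (auto simp: rd_snoc split: option.splits)
  have kne: "k' \<noteq> 2 ^ q a" and pk: "p = theta_n L a k'"
    using r2 by (auto split: if_splits)
  have qab: "q a < q b" using ab q_strict by blast
  have kS: "k' \<in> S a"
  proof (rule ccontr)
    assume "k' \<notin> S a"
    then have "p = k'" using pk theta_n_nS by simp
    then show False using pS S_sub[of a b] ab \<open>k' \<notin> S a\<close> by auto
  qed
  have srt': "sorted_wrt (<) s" and lt: "\<forall>x\<in>set s. x < a"
    using srt by (auto simp: sorted_wrt_append)
  have "length s = L - 1" using len by simp
  then have d3: "3 ^ (L - 1) dvd k'" using R3[OF L2 srt' lt r1 kS] by simp
  define j where "j = k' div 2 ^ q a"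
  have kj: "k' = 2 ^ q a * j" and j1: "j \<ge> 1" using S_decomp[OF kS] j_def by auto
  have pj: "p = 2 ^ q a * theta L j" using pk theta_n_S[OF kS] j_def by simp
  have d3j: "3 ^ (L - 1) dvd j" using d3 kj three_pow_dvd_pow2 by metis
  have "(3::nat) dvd 3 ^ (L - 1)" using L2 by (intro dvd_power) simp
  then have "3 dvd j" using d3j dvd_trans by blast
  have L1: "L \<noteq> 1" using L2 by simp
  have nM1: "j - 1 \<notin> M L"
  proof
    assume "j - 1 \<in> M L"
    then have "3 dvd j - 1" using M_dvd by blast
    with \<open>3 dvd j\<close> have "3 dvd j - (j - 1)" by (rule dvd_diff_nat)
    moreover have "j - (j - 1) = 1" using j1 by simp
    ultimately show False by simp
  qed
  have nM: "j \<notin> M L"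
  proof
    assume jM: "j \<in> M L"
    then have "theta L j = 3 * j + 3" using theta_M L1 by simp
    moreover have "even j" using M_dvd jM by blast
    moreover have "even (theta L j)" using S_pow_odd[OF qab] pS pj by simp
    ultimately show False by simp
  qed
  have th: "theta L j = 3 * j" using theta_gen[OF L1 nM] nM1 by simp
  define e where "e = q b - q a"
  have qb: "q b = q a + e" using qab e_def by auto
  have "2 ^ q b dvd p" using pS by (simp add: S_mem)
  then have "2 ^ q a * 2 ^ e dvd 2 ^ q a * (3 * j)" using pj th qb by (simp add: power_add)
  then have "2 ^ e dvd 3 ^ 1 * j" by simp
  then have ej: "2 ^ e dvd j" using two_pow_dvd_pow3 by blast
  have e31: "e < 31"
  proof (rule ccontr)
    assume "\<not> e < 31"
    then have "(2::nat) ^ 31 dvd 2 ^ e" by (intro le_imp_power_dvd) simp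
    then have "2 ^ 31 dvd j" using ej dvd_trans by blast
    moreover have "coprime ((2::nat) ^ 31) 3" using coprime_power_left_iff[of "2::nat" 31 3] by simp
    ultimately have "2 ^ 31 * 3 dvd j" using \<open>3 dvd j\<close> divides_mult by blast
    then obtain \<kappa> where jk: "j = 2 ^ 31 * 3 * \<kappa>" by blast
    then have k1: "\<kappa> \<ge> 1" using j1 by (cases \<kappa>) auto
    have "\<kappa> \<notin> P L"
    proof
      assume "\<kappa> \<in> P L"
      then obtain pp l where kp: "\<kappa> = 2 ^ pp * 3 ^ l" and ll: "l < L - 2" unfolding P_def by blast
      have "j = 2 ^ (31 + pp) * 3 ^ (l + 1)" using jk kp by (simp add: power_add)
      then have "(3::nat) ^ (L - 1) dvd 2 ^ (31 + pp) * 3 ^ (l + 1)" using d3j by metis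
      then have "(3::nat) ^ (L - 1) dvd 3 ^ (l + 1)" using three_pow_dvd_pow2 by blast
      then have "L - 1 \<le> l + 1" using power_dvd_imp_le by fastforce
      then show False using ll by simp
    qed
    then have "j \<in> M L" using jk k1 unfolding M_def by blast
    then show False using nM by simp
  qed
  have la: "length s \<le> a" using len_le[OF srt] .
  then have a1: "1 \<le> a" using len L2 by simp
  have "a = 1 \<and> b = 2" using q_gap[OF a1 ab] e31 e_def by simp
  moreover then have "L = 2" using la len L2 by simp
  moreover have "s = [0]"
  proof -
    have "length s = 1" using len \<open>L = 2\<close> by simp
    then obtain x where "s = [x]" by (metis length_0_conv length_Suc_conv One_nat_def)
    then show ?thesis using lt \<open>a = 1 \<and> b = 2\<close> by simp
  qed
  ultimately show ?thesis by simp
qed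

lemma foldr_None: "foldr (\<lambda>n acc. Option.bind acc (g_part L n)) s None = None"
  by (induction s) auto

lemma g_seq_snoc_None: "g_seq L (s @ [b]) \<alpha> \<noteq> None \<Longrightarrow> \<alpha> \<in> Nbhd (tt b @ [False])"
  by (auto simp: g_seq_def g_part_def foldr_None split: if_splits)

lemma g_seq_snoc: "\<alpha> \<in> Nbhd (tt b @ [False]) \<Longrightarrow> g_seq L (s @ [b]) \<alpha> = g_seq L s (g L b \<alpha>)"
  by (simp add: g_seq_def g_part_def)



lemma psi1: "psi 1 = [False]" by (simp add: psi_def)
lemma psi2: "psi 2 = [True]" by (simp add: psi_def)

lemma tt_nth0: "psi n \<noteq> [] \<Longrightarrow> tt n ! 0 = hd (psi n)"
  by (simp add: tt_def nth_append hd_conv_nth)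

lemma Nbhd0: "\<alpha> \<in> Nbhd (tt n @ [False]) \<Longrightarrow> psi n \<noteq> [] \<Longrightarrow> \<alpha> 0 = hd (psi n)"
  unfolding Nbhd_def using tt_nth0[of n] by (auto simp: nth_append tt_def)




lemma partB:
  assumes L1: "L \<ge> 1" and srt: "sorted_wrt (<) s" and l2: "2 \<le> length s" and lL: "length s \<le> L"
    and aD: "\<alpha> \<in> D L (last s)" and d1: "g_seq L s \<alpha> \<noteq> None" and d2: "g_seq L (butlast s) \<alpha> \<noteq> None"
  shows "g_seq L s \<alpha> \<noteq> g_seq L (butlast s) \<alpha>"
proof -
  have L2: "L \<ge> 2" using l2 lL by simp
  have L1': "L \<noteq> 1" using L2 by simp
  obtain s' b where sb: "s = s' @ [b]" using l2 by (metis append_butlast_last_id le_zero_eq length_0_conv not_numeral_le_zero)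
  have bl: "butlast s = s'" "last s = b" using sb by simp_all
  have aN: "\<alpha> \<in> Nbhd (tt b @ [False])" using aD bl by (auto simp: D_def split: if_splits)
  have srt': "sorted_wrt (<) (s' @ [b])" using srt sb by simp
  have lt: "\<forall>x\<in>set s'. x < b" using srt' by (auto simp: sorted_wrt_append)
  define m where "m = length s'"
  have m1: "m \<ge> 1" and mL: "0 + length s' \<le> L - 1" using l2 lL sb m_def by auto
  have mb: "m \<le> b" using len_le[OF srt'] m_def by simp
  obtain \<beta>1 where b1: "g_seq L s' (g L b \<alpha>) = Some \<beta>1"
    using d1 g_seq_snoc[OF aN] sb by auto
  obtain \<beta>2 where b2: "g_seq L s' \<alpha> = Some \<beta>2" using d2 bl by auto
  have r: "rd L s' (2 ^ q b) = Some (2 ^ q b * 3 ^ m)"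
    using lemA[OF L2 lt mL] m_def by simp
  have v2: "\<beta>2 (2 ^ q b) = \<alpha> (2 ^ q b * 3 ^ m)" using g_seq_rd[OF b2, of "2 ^ q b"] r by simp
  have "\<beta>1 (2 ^ q b) = g L b \<alpha> (2 ^ q b * 3 ^ m)" using g_seq_rd[OF b1, of "2 ^ q b"] r by simp
  also have "\<dots> = \<alpha> (2 ^ q b * 3 ^ Suc m)"
  proof -
    have "(3::nat) ^ m \<ge> 3" using power_increasing[of 1 m "3::nat"] m1 by simp
    then have ne: "2 ^ q b * 3 ^ m \<noteq> (2::nat) ^ q b" using m1 by simp
    have kS: "2 ^ q b * 3 ^ m \<in> S b" by (simp add: S_mem)
    have nM: "(3::nat) ^ m \<notin> M L" using M_dvd by (metis even_power odd_numeral)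
    have nM1: "(3::nat) ^ m - 1 \<notin> M L"
    proof
      assume "(3::nat) ^ m - 1 \<in> M L"
      then have "3 dvd (3::nat) ^ m - 1" using M_dvd by blast
      moreover have "(3::nat) dvd 3 ^ m" using m1 by (simp add: dvd_power)
      ultimately have "3 dvd (3::nat) ^ m - (3 ^ m - 1)" by (rule dvd_diff_nat[rotated])
      moreover have "(3::nat) ^ m - (3 ^ m - 1) = 1" by simp
      ultimately show False by simp
    qed
    have "theta L (3 ^ m) = 3 * 3 ^ m" using theta_gen[OF L1' nM] nM1 by simp
    then show ?thesis using ne theta_n_S[OF kS] by (simp add: g_def)
  qed
  finally have v1: "\<beta>1 (2 ^ q b) = \<alpha> (2 ^ q b * 3 ^ Suc m)" .
  have "\<alpha> (2 ^ q b * 3 ^ m) \<noteq> \<alpha> (2 ^ q b * 3 ^ Suc m)"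
    using aD bl mb L1' by (auto simp: D_def)
  then have "\<beta>1 \<noteq> \<beta>2" using v1 v2 by metis
  moreover have "g_seq L s \<alpha> = Some \<beta>1" using b1 g_seq_snoc[OF aN, of L s'] sb by simp
  moreover have "g_seq L (butlast s) \<alpha> = Some \<beta>2" using b2 bl by simp
  ultimately show ?thesis by simp
qed



lemma partC:
  assumes L1: "L \<ge> 1" and srt: "sorted_wrt (<) s" and len: "length s = L + 1"
    and d1: "g_seq L s \<alpha> \<noteq> None" and d2: "g_seq L (butlast s) \<alpha> \<noteq> None"
  shows "g_seq L s \<alpha> = g_seq L (butlast s) \<alpha>"
proof -
  have "s \<noteq> []" using len by auto
  then obtain s' b where sb: "s = s' @ [b]" by (metis append_butlast_last_id)
  have bl: "butlast s = s'" using sb by simp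
  have aN: "\<alpha> \<in> Nbhd (tt b @ [False])" using d1 sb g_seq_snoc_None by metis
  have srt': "sorted_wrt (<) (s' @ [b])" using srt sb by simp
  have lt: "\<forall>x\<in>set s'. x < b" using srt' by (auto simp: sorted_wrt_append)
  have "s' \<noteq> []" using len sb L1 by auto
  then obtain s'' a where sa: "s' = s'' @ [a]" by (metis append_butlast_last_id)
  have ab: "a < b" using lt sa by simp
  have srt2: "sorted_wrt (<) (s'' @ [a])" using srt' sa by (simp add: sorted_wrt_append)
  have len2: "length (s'' @ [a]) = L" using len sb sa by simp
  obtain \<beta>1 where b1: "g_seq L s' (g L b \<alpha>) = Some \<beta>1"
    using d1 g_seq_snoc[OF aN] sb by auto
  obtain \<beta>2 where b2: "g_seq L s' \<alpha> = Some \<beta>2" using d2 bl by auto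
  have key: "p \<notin> S b" if rp: "rd L s' k = Some p" for k p
  proof
    assume pS: "p \<in> S b"
    show False
    proof (cases "L = 1")
      case True
      then have "s'' = []" using len2 by simp
      then have rp1: "rd L [a] k = Some p" using rp sa by simp
      then have kne: "k \<noteq> 2 ^ q a" and pk: "p = theta_n L a k" by (auto split: if_splits)
      have qab: "q a < q b" using ab q_strict by blast
      show False
      proof (cases "k \<in> S a")
        case True
        then have "p = 2 ^ q a * (2 * (k div 2 ^ q a) + 1)" using pk theta_n_S \<open>L = 1\<close> by (simp add: theta_def)
        then have "even (2 * (k div 2 ^ q a) + 1)" using S_pow_odd[OF qab] pS by metis
        then show False by simp
      next
        case False
        then have "p = k" using pk theta_n_nS by simp
        then show False using pS S_sub[of a b] ab False by auto
      qed
    next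
      case False
      then have L2: "L \<ge> 2" using L1 by simp
      have "L = 2 \<and> s'' = [0] \<and> a = 1 \<and> b = 2" using lemC[OF L2 srt2 len2 ab _ pS] rp sa by simp
      then have ss: "s = [0, 1] @ [2]" and bs: "butlast s = [0] @ [1]" using sb sa by simp_all
      have "\<alpha> \<in> Nbhd (tt 2 @ [False])" using d1 ss g_seq_snoc_None by metis
      then have "\<alpha> 0 = True" using Nbhd0[of \<alpha> 2] psi2 by simp
      moreover have "\<alpha> \<in> Nbhd (tt 1 @ [False])" using d2 bs g_seq_snoc_None by metis
      then have "\<alpha> 0 = False" using Nbhd0[of \<alpha> 1] psi1 by simp
      ultimately show False by simp
    qed
  qed
  have "\<beta>1 = \<beta>2"
  proof
    fix k
    show "\<beta>1 k = \<beta>2 k"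
    proof (cases "rd L s' k")
      case None
      then show ?thesis using g_seq_rd[OF b1, of k] g_seq_rd[OF b2, of k] by simp
    next
      case (Some p)
      have pS: "p \<notin> S b" using key[OF Some] .
      moreover have "2 ^ q b \<in> S b" by (simp add: S_mem)
      ultimately have "g L b \<alpha> p = \<alpha> p" using theta_n_nS by (auto simp: g_def)
      then show ?thesis using g_seq_rd[OF b1, of k] g_seq_rd[OF b2, of k] Some by simp
    qed
  qed
  moreover have "g_seq L s \<alpha> = Some \<beta>1" using b1 g_seq_snoc[OF aN, of L s'] sb by simp
  moreover have "g_seq L (butlast s) \<alpha> = Some \<beta>2" using b2 bl by simp
  ultimately show ?thesis by simp
qed




definition cyl :: "(nat \<Rightarrow> bool) \<Rightarrow> nat \<Rightarrow> (nat \<Rightarrow> bool) set" where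
  "cyl \<alpha> n = {\<beta>. \<forall>i<n. \<beta> i = \<alpha> i}"

lemma cyl_self[simp]: "\<alpha> \<in> cyl \<alpha> n" by (simp add: cyl_def)

lemma cyl_mono: "n \<le> m \<Longrightarrow> cyl \<alpha> m \<subseteq> cyl \<alpha> n" by (auto simp: cyl_def)

lemma topspace_cantor[simp]: "topspace cantor = UNIV"
  by (simp add: cantor_def PiE_UNIV_domain)

lemma openin_cantor: "openin cantor A \<longleftrightarrow> (\<forall>\<alpha>\<in>A. \<exists>n. cyl \<alpha> n \<subseteq> A)"
proof
  assume "openin cantor A"
  then have h: "\<forall>x\<in>A. \<exists>U. finite {i. U i \<noteq> UNIV} \<and> x \<in> Pi UNIV U \<and> Pi UNIV U \<subseteq> A"
    unfolding cantor_def openin_product_topology_alt by (simp add: PiE_UNIV_domain)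
  show "\<forall>\<alpha>\<in>A. \<exists>n. cyl \<alpha> n \<subseteq> A"
  proof
    fix \<alpha> assume "\<alpha> \<in> A"
    then obtain U where U: "finite {i. U i \<noteq> UNIV}" "\<alpha> \<in> Pi UNIV U" "Pi UNIV U \<subseteq> A" using h by blast
    obtain n where n: "{i. U i \<noteq> UNIV} \<subseteq> {..<n}" using finite_nat_bounded[OF U(1)] by blast
    have "cyl \<alpha> n \<subseteq> Pi UNIV U"
    proof
      fix \<beta> assume b: "\<beta> \<in> cyl \<alpha> n"
      show "\<beta> \<in> Pi UNIV U"
      proof (rule Pi_I)
        fix i
        show "\<beta> i \<in> U i"
        proof (cases "U i = UNIV")
          case False
          then have "i < n" using n by auto
          then show ?thesis using b U(2) by (auto simp: cyl_def)
        qed simp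
      qed
    qed
    then show "\<exists>n. cyl \<alpha> n \<subseteq> A" using U(3) by blast
  qed
next
  assume h: "\<forall>\<alpha>\<in>A. \<exists>n. cyl \<alpha> n \<subseteq> A"
  show "openin cantor A"
    unfolding cantor_def openin_product_topology_alt
  proof (simp add: PiE_UNIV_domain, intro ballI)
    fix \<alpha> assume "\<alpha> \<in> A"
    then obtain n where n: "cyl \<alpha> n \<subseteq> A" using h by blast
    define U where "U i = (if i < n then {\<alpha> i} else UNIV)" for i
    have "finite {i. U i \<noteq> UNIV}" by (rule finite_subset[of _ "{..<n}"]) (auto simp: U_def)
    moreover have "\<alpha> \<in> Pi UNIV U" by (simp add: U_def)
    moreover have "Pi UNIV U = cyl \<alpha> n" by (auto simp: U_def cyl_def Pi_def split: if_splits)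
    ultimately show "\<exists>U. finite {i. U i \<noteq> UNIV} \<and> \<alpha> \<in> Pi UNIV U \<and> Pi UNIV U \<subseteq> A"
      using n by blast
  qed
qed

lemma closedin_cantor: "closedin cantor A \<longleftrightarrow> openin cantor (UNIV - A)"
  unfolding closedin_def by simp

lemma clopen_finite_dep:
  assumes dep: "\<And>\<alpha> \<beta>. (\<forall>i<N. \<alpha> i = \<beta> i) \<Longrightarrow> \<alpha> \<in> A \<Longrightarrow> \<beta> \<in> A"
  shows "openin cantor A" "closedin cantor A"
proof -
  show "openin cantor A" unfolding openin_cantor
  proof
    fix \<alpha> assume a: "\<alpha> \<in> A"
    have "cyl \<alpha> N \<subseteq> A"
    proof
      fix \<beta> assume "\<beta> \<in> cyl \<alpha> N"
      then have "\<forall>i<N. \<alpha> i = \<beta> i" by (simp add: cyl_def)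
      then show "\<beta> \<in> A" using dep a by blast
    qed
    then show "\<exists>n. cyl \<alpha> n \<subseteq> A" by blast
  qed
  show "closedin cantor A" unfolding closedin_cantor openin_cantor
  proof
    fix \<alpha> assume a: "\<alpha> \<in> UNIV - A"
    have "cyl \<alpha> N \<subseteq> UNIV - A"
    proof
      fix \<beta> assume "\<beta> \<in> cyl \<alpha> N"
      then have "\<forall>i<N. \<beta> i = \<alpha> i" by (simp add: cyl_def)
      then show "\<beta> \<in> UNIV - A" using dep a by blast
    qed
    then show "\<exists>n. cyl \<alpha> n \<subseteq> UNIV - A" by blast
  qed
qed

lemma cyl_clopen: "openin cantor (cyl \<alpha> n)" "closedin cantor (cyl \<alpha> n)"
  by (rule clopen_finite_dep[of n], simp add: cyl_def)+




lemma cantor_dim0: "cantor dim_le 0"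
  unfolding dimension_le_0_neighbourhood_base_of_clopen neighbourhood_base_of
proof (intro allI impI)
  fix W x assume "openin cantor W \<and> x \<in> W"
  then obtain n where n: "cyl x n \<subseteq> W" unfolding openin_cantor by blast
  show "\<exists>U V. openin cantor U \<and> (closedin cantor V \<and> openin cantor V) \<and> x \<in> U \<and> U \<subseteq> V \<and> V \<subseteq> W"
    using cyl_clopen[of x n] n by (intro exI[of _ "cyl x n"]) auto
qed

lemma cantor_perfect: "perfect_top cantor"
  unfolding perfect_top_def
proof (rule set_eqI)
  fix \<alpha> :: "nat \<Rightarrow> bool"
  have "\<alpha> \<in> cantor derived_set_of topspace cantor"
    unfolding in_derived_set_of
  proof (intro conjI allI impI)
    show "\<alpha> \<in> topspace cantor" by simp
    fix T assume "\<alpha> \<in> T \<and> openin cantor T"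
    then obtain n where n: "cyl \<alpha> n \<subseteq> T" unfolding openin_cantor by blast
    define \<beta> where "\<beta> = \<alpha>(n := \<not> \<alpha> n)"
    have "\<beta> \<in> cyl \<alpha> n" by (simp add: \<beta>_def cyl_def)
    moreover have "\<beta> \<noteq> \<alpha>" by (metis \<beta>_def fun_upd_same)
    ultimately show "\<exists>y. y \<noteq> \<alpha> \<and> y \<in> topspace cantor \<and> y \<in> T" using n by auto
  qed
  then show "\<alpha> \<in> cantor derived_set_of topspace cantor \<longleftrightarrow> \<alpha> \<in> topspace cantor" by simp
qed

lemma cantor_cms: "completely_metrizable_space cantor"
  unfolding cantor_def completely_metrizable_space_product_topology
  by (simp add: completely_metrizable_space_discrete_topology)

lemma cantor_sep: "separable_space cantor"
  unfolding separable_space_def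
proof -
  define e where "e w = (\<lambda>i. i < length w \<and> w ! i)" for w :: "bool list"
  have "\<alpha> \<in> cantor closure_of range e" for \<alpha>
    unfolding in_closure_of
  proof (intro conjI allI impI)
    show "\<alpha> \<in> topspace cantor" by simp
    fix T assume "\<alpha> \<in> T \<and> openin cantor T"
    then obtain n where n: "cyl \<alpha> n \<subseteq> T" unfolding openin_cantor by blast
    have "e (map \<alpha> [0..<n]) \<in> cyl \<alpha> n" by (simp add: e_def cyl_def)
    then show "\<exists>y. y \<in> range e \<and> y \<in> T" using n by blast
  qed
  then have "cantor closure_of range e = topspace cantor" by auto
  then show "\<exists>C. countable C \<and> C \<subseteq> topspace cantor \<and> cantor closure_of C = topspace cantor"
    by (intro exI[of _ "range e"]) simp
qed

lemma cantor_polish: "Polish_space cantor"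
  by (simp add: Polish_space_def cantor_cms cantor_sep)

lemma cantor_compact: "compact_space cantor"
  unfolding cantor_def compact_space_product_topology
  by (simp add: compact_space_discrete_topology)

lemma cantor_hausdorff: "Hausdorff_space cantor"
  unfolding cantor_def Hausdorff_space_product_topology by simp




lemma theta_ge: "j \<ge> 1 \<Longrightarrow> j \<le> theta L j \<and> 1 \<le> theta L j"
proof -
  assume j: "j \<ge> 1"
  show ?thesis
  proof (cases "L = 1")
    case True then show ?thesis by (simp add: theta_def)
  next
    case L: False
    show ?thesis
    proof (cases "j \<in> M L")
      case True then show ?thesis using theta_M[OF L True] by simp
    next
      case nM: False
      show ?thesis
      proof (cases "j - 1 \<in> M L")
        case True
        then have "j - 1 \<ge> 1" unfolding M_def by auto
        then show ?thesis using theta_M1[OF L nM True j] by arith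
      next
        case False then show ?thesis using theta_gen[OF L nM] j by simp
      qed
    qed
  qed
qed

lemma theta_cases: "L \<noteq> 1 \<Longrightarrow> j \<ge> 1 \<Longrightarrow>
   (j \<in> M L \<and> theta L j = 3 * j + 3) \<or> (j \<notin> M L \<and> j - 1 \<in> M L \<and> theta L j = 3 * j - 3) \<or>
   (j \<notin> M L \<and> j - 1 \<notin> M L \<and> theta L j = 3 * j)"
  using theta_M theta_M1 theta_gen by blast

lemma theta_inj: "j \<ge> 1 \<Longrightarrow> j' \<ge> 1 \<Longrightarrow> theta L j = theta L j' \<Longrightarrow> j = j'"
proof -
  assume j: "j \<ge> 1" and j': "j' \<ge> 1" and e: "theta L j = theta L j'"
  show "j = j'"
  proof (cases "L = 1")
    case True then show ?thesis using e by (simp add: theta_def)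
  next
    case L: False
    have sub: "m \<in> M L \<Longrightarrow> m + 1 \<in> M L \<Longrightarrow> False" for m
      using M_dvd[of m L] M_dvd[of "m+1" L] by presburger
    have m1: "m \<in> M L \<Longrightarrow> m \<ge> 1" for m unfolding M_def by auto
    have T: "theta L x = (if x \<in> M L then 3 * x + 3 else if x - 1 \<in> M L then 3 * x - 3 else 3 * x)"
      if "x \<ge> 1" for x using theta_cases[OF L that] by auto
    show ?thesis
    proof (cases "j \<in> M L")
      case jM: True
      show ?thesis
      proof (cases "j' \<in> M L")
        case True then show ?thesis using e T[OF j] T[OF j'] jM by simp
      next
        case False
        show ?thesis
        proof (cases "j' - 1 \<in> M L")
          case True
          then have "3 * j + 3 = 3 * j' - 3" using e T[OF j] T[OF j'] jM False by simp
          then have "j' - 1 = j + 1" by simp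
          then show ?thesis using sub jM True by metis
        next
          case nn: False
          then have "3 * j + 3 = 3 * j'" using e T[OF j] T[OF j'] jM False by simp
          then have "j' - 1 = j" by simp
          then show ?thesis using jM nn by simp
        qed
      qed
    next
      case jnM: False
      show ?thesis
      proof (cases "j' \<in> M L")
        case jM': True
        show ?thesis
        proof (cases "j - 1 \<in> M L")
          case True
          then have "3 * j' + 3 = 3 * j - 3" using e T[OF j] T[OF j'] jM' jnM by simp
          then have "j - 1 = j' + 1" by simp
          then show ?thesis using sub jM' True by metis
        next
          case nn: False
          then have "3 * j' + 3 = 3 * j" using e T[OF j] T[OF j'] jM' jnM by simp
          then have "j - 1 = j'" by simp
          then show ?thesis using jM' nn by simp
        qed
      next
        case jnM': False
        show ?thesis
        proof (cases "j - 1 \<in> M L"; cases "j' - 1 \<in> M L")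
          assume a: "j - 1 \<in> M L" "j' - 1 \<in> M L"
          then show ?thesis using e T[OF j] T[OF j'] jnM jnM' j j' by simp
        next
          assume a: "j - 1 \<in> M L" "j' - 1 \<notin> M L"
          then have "3 * j - 3 = 3 * j'" using e T[OF j] T[OF j'] jnM jnM' by simp
          then have "j - 1 = j'" by simp
          then show ?thesis using a jnM' by simp
        next
          assume a: "j - 1 \<notin> M L" "j' - 1 \<in> M L"
          then have "3 * j = 3 * j' - 3" using e T[OF j] T[OF j'] jnM jnM' by simp
          then have "j' - 1 = j" by simp
          then show ?thesis using a jnM by simp
        next
          assume a: "j - 1 \<notin> M L" "j' - 1 \<notin> M L"
          then show ?thesis using e T[OF j] T[OF j'] jnM jnM' by simp
        qed
      qed
    qed
  qed
qed

lemma theta_n_ge: "k \<le> theta_n L n k"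
proof (cases "k \<in> S n")
  case True
  then have d: "k = 2 ^ q n * (k div 2 ^ q n)" "k div 2 ^ q n \<ge> 1" using S_decomp by blast+
  have "k div 2 ^ q n \<le> theta L (k div 2 ^ q n)" using theta_ge[OF d(2)] by simp
  then have "2 ^ q n * (k div 2 ^ q n) \<le> 2 ^ q n * theta L (k div 2 ^ q n)" by simp
  then show ?thesis using d(1) theta_n_S[OF True] by simp
qed (simp add: theta_n_nS)

lemma theta_n_S_iff: "theta_n L n k \<in> S n \<longleftrightarrow> k \<in> S n"
proof (cases "k \<in> S n")
  case True
  then have d: "k div 2 ^ q n \<ge> 1" using S_decomp by blast
  have "1 \<le> theta L (k div 2 ^ q n)" using theta_ge[OF d, of L] by blast
  then show ?thesis using True theta_n_S[OF True] by (simp add: S_mem)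
qed (simp add: theta_n_nS)

lemma theta_n_inj: "theta_n L n k = theta_n L n k' \<Longrightarrow> k = k'"
proof -
  assume e: "theta_n L n k = theta_n L n k'"
  have "k \<in> S n \<longleftrightarrow> k' \<in> S n" using theta_n_S_iff[of L n k] theta_n_S_iff[of L n k'] e by simp
  then show "k = k'"
  proof (cases "k \<in> S n")
    case True
    then have kk: "k' \<in> S n" using \<open>k \<in> S n \<longleftrightarrow> k' \<in> S n\<close> by simp
    have d: "k = 2 ^ q n * (k div 2 ^ q n)" "k div 2 ^ q n \<ge> 1" using S_decomp[OF True] by blast+
    have d': "k' = 2 ^ q n * (k' div 2 ^ q n)" "k' div 2 ^ q n \<ge> 1" using S_decomp[OF kk] by blast+
    have "theta L (k div 2 ^ q n) = theta L (k' div 2 ^ q n)"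
      using e theta_n_S[OF True] theta_n_S[OF kk] by simp
    then have "k div 2 ^ q n = k' div 2 ^ q n" using theta_inj d(2) d'(2) by blast
    then show ?thesis using d(1) d'(1) by metis
  next
    case False
    then show ?thesis using e \<open>k \<in> S n \<longleftrightarrow> k' \<in> S n\<close> by (simp add: theta_n_nS)
  qed
qed

lemma theta_not_6: "theta L j \<noteq> 6 * r + 4"
proof (cases "L = 1")
  case True then show ?thesis by (simp add: theta_def) presburger
next
  case False
  have "3 dvd theta L j"
  proof (cases "j \<ge> 1")
    case True
    from theta_cases[OF False True] show ?thesis
    proof (elim disjE conjE)
      assume "theta L j = 3 * j - 3" 
      moreover have "3 * j - 3 = 3 * (j - 1)" by simp
      ultimately show ?thesis by simp
    qed simp_all
  next
    case ff: False
    then have "j = 0" by simp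
    have "0 \<notin> M L" unfolding M_def by auto
    moreover have "0 \<notin> (\<lambda>m. m + 1) ` M L" by auto
    ultimately show ?thesis using False \<open>j = 0\<close> unfolding theta_def by simp
  qed
  moreover have "\<not> 3 dvd 6 * r + (4::nat)" by presburger
  ultimately show ?thesis by metis
qed

lemma theta_n_free: "theta_n L n k \<noteq> 2 ^ q n * (6 * r + 4)"
proof (cases "k \<in> S n")
  case True
  then show ?thesis using theta_n_S[OF True] theta_not_6[of L "k div 2 ^ q n" r] by simp
next
  case False
  have "2 ^ q n * (6 * r + 4) \<in> S n" by (simp add: S_mem)
  then show ?thesis using False theta_n_nS by metis
qed




declare bin_tail.simps[simp del]

lemma bin_tail_len: "length (bin_tail m) \<le> m"
proof (induction m rule: bin_tail.induct)
  case (1 m)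
  show ?case
  proof (cases "m \<le> 1")
    case True then show ?thesis by (simp add: bin_tail.simps)
  next
    case False
    then have "length (bin_tail m) = length (bin_tail (m div 2)) + 1" by (simp add: bin_tail.simps)
    also have "\<dots> \<le> m div 2 + 1" using 1 False by simp
    also have "\<dots> \<le> m" using False by simp
    finally show ?thesis .
  qed
qed

lemma q_ge: "n \<le> q n"
proof (induction n)
  case (Suc n)
  then show ?case using q_Suc_gt[of n] by (simp only: Suc_le_eq)
qed simp

lemma psi_len: "length (psi n) \<le> 2 ^ q n"
proof -
  have "length (psi n) \<le> Suc n" unfolding psi_def by (rule bin_tail_len)
  also have "Suc n \<le> 2 ^ n" by (induction n) auto
  also have "(2::nat) ^ n \<le> 2 ^ q n" using q_ge by simp
  finally show ?thesis .
qed

lemma tt_len: "length (tt n) = 2 ^ q n"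
  using psi_len[of n] by (simp add: tt_def)

lemma tt_nth: "i < length (psi n) \<Longrightarrow> tt n ! i = psi n ! i"
  by (simp add: tt_def nth_append)

lemma Nbhd_tt: "\<alpha> \<in> Nbhd (tt n @ [c]) \<longleftrightarrow> (\<forall>i < 2 ^ q n. \<alpha> i = tt n ! i) \<and> \<alpha> (2 ^ q n) = c"
  unfolding Nbhd_def using tt_len[of n]
  by (auto simp: nth_append less_Suc_eq)

fun bval :: "bool list \<Rightarrow> nat" where
  "bval w = foldl (\<lambda>a b. 2 * a + (if b then 1 else 0)) 1 w"

lemma bval_snoc: "bval (w @ [b]) = 2 * bval w + (if b then 1 else 0)" by simp
lemma bval_pos: "bval w \<ge> 1"
  by (induction w rule: rev_induct) (auto simp del: bval.simps simp: bval_snoc, simp)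

lemma bin_tail_bval: "bin_tail (bval w) = w"
proof (induction w rule: rev_induct)
  case Nil then show ?case by (simp add: bin_tail.simps)
next
  case (snoc b w)
  have p: "bval w \<ge> 1" by (rule bval_pos)
  have e: "bval (w @ [b]) = 2 * bval w + (if b then 1 else 0)" by (rule bval_snoc)
  then have "\<not> bval (w @ [b]) \<le> 1" using p by simp
  then have "bin_tail (bval (w @ [b])) = bin_tail (bval (w @ [b]) div 2) @ [odd (bval (w @ [b]))]"
    by (subst bin_tail.simps) simp
  also have "bval (w @ [b]) div 2 = bval w" using e by simp
  also have "odd (bval (w @ [b])) = b" using e by simp
  finally show ?case using snoc.IH by (simp del: bval.simps)
qed

lemma psi_surj: "\<exists>n. psi n = w"
proof -
  have "Suc (bval w - 1) = bval w" using bval_pos[of w] by simp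
  then have "psi (bval w - 1) = w" unfolding psi_def by (simp only: bin_tail_bval)
  then show ?thesis by blast
qed




definition N0 :: "nat \<Rightarrow> nat" where "N0 n = 2 ^ q n * 3 ^ Suc n + 1"

lemma N0_big: "m \<le> Suc n \<Longrightarrow> 2 ^ q n * 3 ^ m < N0 n"
proof -
  assume "m \<le> Suc n"
  then have "(3::nat) ^ m \<le> 3 ^ Suc n" by (rule power_increasing) simp
  then have "2 ^ q n * 3 ^ m \<le> (2::nat) ^ q n * 3 ^ Suc n" by simp
  then show ?thesis by (simp only: N0_def)
qed

lemma D_sub: "D L n \<subseteq> Nbhd (tt n @ [False])"
  by (auto simp: D_def)

lemma D_dep:
  assumes ag: "\<forall>i<N0 n. \<alpha> i = \<beta> i" and aD: "\<alpha> \<in> D L n"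
  shows "\<beta> \<in> D L n"
proof -
  have p0: "2 ^ q n < N0 n" using N0_big[of 0 n] by simp
  have aN: "\<alpha> \<in> Nbhd (tt n @ [False])" using aD D_sub by blast
  have bN: "\<beta> \<in> Nbhd (tt n @ [False])"
    using aN ag p0 unfolding Nbhd_tt by auto
  show ?thesis
  proof (cases "L = 1")
    case True then show ?thesis using bN by (simp add: D_def)
  next
    case False
    have "\<forall>m \<le> n. \<beta> (2 ^ q n * 3 ^ m) \<noteq> \<beta> (2 ^ q n * 3 ^ Suc m)"
    proof (intro allI impI)
      fix m assume m: "m \<le> n"
      have "\<alpha> (2 ^ q n * 3 ^ m) \<noteq> \<alpha> (2 ^ q n * 3 ^ Suc m)" using aD m False by (simp add: D_def)
      moreover have "2 ^ q n * 3 ^ m < N0 n" "2 ^ q n * 3 ^ Suc m < N0 n" using m by (intro N0_big; simp)+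
      ultimately show "\<beta> (2 ^ q n * 3 ^ m) \<noteq> \<beta> (2 ^ q n * 3 ^ Suc m)" using ag by simp
    qed
    then show ?thesis using bN False by (simp add: D_def)
  qed
qed

lemma D_clopen: "openin cantor (D L n)" "closedin cantor (D L n)"
  using clopen_finite_dep[of "N0 n" "D L n"] D_dep by blast+

lemma g_cont: "continuous_map cantor cantor (g L n)"
  unfolding cantor_def continuous_map_componentwise_UNIV
proof
  fix k
  show "continuous_map (product_topology (\<lambda>_. discrete_topology UNIV) UNIV) (discrete_topology UNIV) (\<lambda>x. g L n x k)"
  proof (cases "k = 2 ^ q n")
    case True
    then show ?thesis by (simp add: g_def)
  next
    case False
    then have "(\<lambda>x. g L n x k) = (\<lambda>x. x (theta_n L n k))" by (simp add: g_def)
    then show ?thesis using continuous_map_product_projection[of "theta_n L n k" UNIV "\<lambda>_. discrete_topology UNIV"]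
      by simp
  qed
qed

definition pre :: "nat \<Rightarrow> nat \<Rightarrow> (nat \<Rightarrow> bool) \<Rightarrow> (nat \<Rightarrow> bool) \<Rightarrow> (nat \<Rightarrow> bool)" where
  "pre L n \<alpha> \<beta>' = (\<lambda>p. if \<exists>k. k \<noteq> 2 ^ q n \<and> theta_n L n k = p
      then \<beta>' (THE k. k \<noteq> 2 ^ q n \<and> theta_n L n k = p) else \<alpha> p)"

lemma pre_the: "k \<noteq> 2 ^ q n \<Longrightarrow> (THE k'. k' \<noteq> 2 ^ q n \<and> theta_n L n k' = theta_n L n k) = k"
  by (rule the_equality) (auto dest: theta_n_inj)

lemma pre_g: "\<beta>' (2 ^ q n) = True \<Longrightarrow> g L n (pre L n \<alpha> \<beta>') = \<beta>'"
proof
  fix k assume t: "\<beta>' (2 ^ q n) = True"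
  show "g L n (pre L n \<alpha> \<beta>') k = \<beta>' k"
  proof (cases "k = 2 ^ q n")
    case True then show ?thesis using t by (simp add: g_def)
  next
    case False
    then have "pre L n \<alpha> \<beta>' (theta_n L n k) = \<beta>' k"
      unfolding pre_def using pre_the[OF False, of L] by auto
    then show ?thesis using False by (simp add: g_def)
  qed
qed

lemma pre_agree: "\<beta>' \<in> cyl (g L n \<alpha>) N \<Longrightarrow> p < N \<Longrightarrow> pre L n \<alpha> \<beta>' p = \<alpha> p"
proof -
  assume b: "\<beta>' \<in> cyl (g L n \<alpha>) N" and p: "p < N"
  show ?thesis
  proof (cases "\<exists>k. k \<noteq> 2 ^ q n \<and> theta_n L n k = p")
    case True
    then obtain k where k: "k \<noteq> 2 ^ q n" "theta_n L n k = p" by blast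
    have "k \<le> p" using theta_n_ge[of k L n] k by simp
    then have "\<beta>' k = g L n \<alpha> k" using b p by (simp add: cyl_def)
    also have "\<dots> = \<alpha> p" using k by (simp add: g_def)
    finally show ?thesis unfolding pre_def using True pre_the[OF k(1), of L] k by auto
  next
    case False then show ?thesis unfolding pre_def by auto
  qed
qed

lemma g_image_open:
  assumes T: "openin cantor T"
  shows "openin cantor (g L n ` (T \<inter> D L n))"
  unfolding openin_cantor
proof
  fix y assume "y \<in> g L n ` (T \<inter> D L n)"
  then obtain \<alpha> where a: "\<alpha> \<in> T" "\<alpha> \<in> D L n" "y = g L n \<alpha>" by blast
  obtain N1 where N1: "cyl \<alpha> N1 \<subseteq> T" using T a(1) unfolding openin_cantor by blast
  define N where "N = max N1 (N0 n) + 2 ^ q n + 1"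
  have "cyl y N \<subseteq> g L n ` (T \<inter> D L n)"
  proof
    fix \<beta>' assume b: "\<beta>' \<in> cyl y N"
    have "2 ^ q n < N" by (simp add: N_def)
    then have t: "\<beta>' (2 ^ q n) = True" using b a(3) by (simp add: cyl_def g_def)
    define \<alpha>' where "\<alpha>' = pre L n \<alpha> \<beta>'"
    have b': "\<beta>' \<in> cyl (g L n \<alpha>) N" using b a(3) by simp
    have ag: "\<alpha>' p = \<alpha> p" if "p < N" for p using pre_agree[OF b' that] \<alpha>'_def by simp
    have "\<alpha>' \<in> cyl \<alpha> N1" using ag by (simp add: cyl_def N_def)
    then have "\<alpha>' \<in> T" using N1 by blast
    moreover have "\<forall>i<N0 n. \<alpha> i = \<alpha>' i" using ag by (simp add: N_def)
    then have "\<alpha>' \<in> D L n" using D_dep a(2) by blast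
    moreover have "g L n \<alpha>' = \<beta>'" unfolding \<alpha>'_def by (rule pre_g) (rule t)
    ultimately show "\<beta>' \<in> g L n ` (T \<inter> D L n)" by blast
  qed
  then show "\<exists>m. cyl y m \<subseteq> g L n ` (T \<inter> D L n)" by blast
qed

lemma g_pcom: "partial_cont_open_map cantor (D L n) (g L n)"
proof -
  have cont: "continuous_map (subtopology cantor (D L n)) cantor (g L n)"
    using g_cont continuous_map_from_subtopology by blast
  have om: "open_map (subtopology cantor (D L n)) cantor (g L n)"
    unfolding open_map_def openin_subtopology
    using g_image_open by blast
  have "openin cantor UNIV" using openin_topspace[of cantor] by simp
  then have op: "openin cantor (g L n ` D L n)" using g_image_open[of UNIV L n] by simp
  have "compactin cantor (D L n)" using closedin_compact_space[OF cantor_compact D_clopen(2)] .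
  then have "compactin (subtopology cantor (D L n)) (D L n)" by (simp add: compactin_subtopology)
  then have "compactin cantor (g L n ` D L n)" using image_compactin cont by blast
  then have cl: "closedin cantor (g L n ` D L n)" using compactin_imp_closedin cantor_hausdorff by blast
  show ?thesis unfolding partial_cont_open_map_def
    using D_clopen cont om op cl by blast
qed




lemma S_ge: "x \<in> S n \<Longrightarrow> 2 ^ q n \<le> x"
  by (auto simp: S_mem dest: dvd_imp_le)

lemma uncountable_fun: "uncountable (UNIV :: (nat \<Rightarrow> bool) set)"
proof
  assume "countable (UNIV :: (nat \<Rightarrow> bool) set)"
  then obtain f :: "nat \<Rightarrow> (nat \<Rightarrow> bool)" where f: "range f = UNIV"
    using uncountable_def by blast
  define d where "d = (\<lambda>n. \<not> f n n)"
  obtain m where "f m = d" using f by (metis UNIV_I imageE)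
  then have "d m = (\<not> d m)" unfolding d_def by metis
  then show False by simp
qed

lemma not_in_graph: "(\<alpha>, \<alpha>) \<notin> graph_on (D L n) (g L n)"
proof
  assume "(\<alpha>, \<alpha>) \<in> graph_on (D L n) (g L n)"
  then have a: "\<alpha> \<in> D L n" "g L n \<alpha> = \<alpha>" by (auto simp: graph_on_def)
  then have "\<alpha> (2 ^ q n) = False" using D_sub Nbhd_tt by blast
  moreover have "g L n \<alpha> (2 ^ q n) = True" by (simp add: g_def)
  ultimately show False using a(2) by simp
qed

lemma pow3_inj: "(2::nat) ^ x * 3 ^ m = 2 ^ x * 3 ^ m' \<Longrightarrow> m = m'"
  by simp

lemma diag_close: "(\<alpha>, \<alpha>) \<in> prod_topology cantor cantor closure_of (\<Union>n. graph_on (D L n) (g L n))"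
  unfolding in_closure_of
proof (intro conjI allI impI)
  show "(\<alpha>, \<alpha>) \<in> topspace (prod_topology cantor cantor)" by simp
  fix T assume "(\<alpha>, \<alpha>) \<in> T \<and> openin (prod_topology cantor cantor) T"
  then obtain U V where UV: "openin cantor U" "openin cantor V" "\<alpha> \<in> U" "\<alpha> \<in> V" "U \<times> V \<subseteq> T"
    unfolding openin_prod_topology_alt by blast
  obtain N1 where N1: "cyl \<alpha> N1 \<subseteq> U" using UV(1,3) unfolding openin_cantor by blast
  obtain N2 where N2: "cyl \<alpha> N2 \<subseteq> V" using UV(2,4) unfolding openin_cantor by blast
  define N where "N = N1 + N2"
  obtain n where n: "psi n = map \<alpha> [0..<N]" using psi_surj by blast
  have Nq: "N \<le> 2 ^ q n" using psi_len[of n] n by simp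
  define \<beta> where "\<beta> p = (if p < 2 ^ q n then tt n ! p else (\<exists>m. p = 2 ^ q n * 3 ^ m \<and> odd m))" for p
  have b3: "\<beta> (2 ^ q n * 3 ^ m) = odd m" for m
  proof -
    have "\<not> 2 ^ q n * 3 ^ m < (2::nat) ^ q n" by simp
    then show ?thesis unfolding \<beta>_def by auto
  qed
  have bN: "\<beta> \<in> Nbhd (tt n @ [False])"
    unfolding Nbhd_tt using b3[of 0] by (simp add: \<beta>_def)
  have bD: "\<beta> \<in> D L n"
  proof (cases "L = 1")
    case True then show ?thesis using bN by (simp add: D_def)
  next
    case L: False
    have b3': "\<beta> (2 ^ q n * (3 * 3 ^ m)) = even m" for m using b3[of "Suc m"] by simp
    show ?thesis using L bN b3 b3' by (simp add: D_def)
  qed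
  have agree: "\<beta> i = \<alpha> i" if "i < N" for i
  proof -
    have "i < 2 ^ q n" using that Nq by simp
    moreover have "i < length (psi n)" using that n by simp
    ultimately show ?thesis using tt_nth[of i n] n that by (simp add: \<beta>_def)
  qed
  have gagree: "g L n \<beta> i = \<alpha> i" if "i < N" for i
  proof -
    have i: "i < 2 ^ q n" using that Nq by simp
    then have "i \<notin> S n" using S_ge by fastforce
    then show ?thesis using i agree[OF that] by (simp add: g_def theta_n_nS)
  qed
  have "\<beta> \<in> U" using N1 agree by (auto simp: cyl_def N_def)
  moreover have "g L n \<beta> \<in> V" using N2 gagree by (auto simp: cyl_def N_def)
  moreover have "(\<beta>, g L n \<beta>) \<in> (\<Union>n. graph_on (D L n) (g L n))" using bD by (auto simp: graph_on_def)
  ultimately show "\<exists>y. y \<in> (\<Union>n. graph_on (D L n) (g L n)) \<and> y \<in> T" using UV(5) by blast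
qed

lemma not_ctbl:
  assumes U: "openin cantor U" "U \<noteq> {}" "U \<subseteq> D L n"
  shows "\<not> (\<forall>y. countable {x \<in> U. g L n x = y})"
proof
  assume ct: "\<forall>y. countable {x \<in> U. g L n x = y}"
  obtain \<alpha> where a: "\<alpha> \<in> U" using U(2) by blast
  obtain N where N: "cyl \<alpha> N \<subseteq> U" using U(1) a unfolding openin_cantor by blast
  define pos where "pos j = 2 ^ q n * (6 * (N + j) + 4)" for j
  have pos_inj: "pos j = pos j' \<Longrightarrow> j = j'" for j j' by (simp add: pos_def)
  have pos_big: "N < pos j" for j
  proof -
    have "N < 6 * (N + j) + 4" by simp
    also have "\<dots> \<le> pos j" by (simp add: pos_def)
    finally show ?thesis .
  qed
  define h where "h c = (\<lambda>p. if p \<in> range pos then c (THE j. pos j = p) else \<alpha> p)" for c :: "nat \<Rightarrow> bool"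
  have hpos: "h c (pos j) = c j" for c j
  proof -
    have "(THE j'. pos j' = pos j) = j" by (rule the_equality) (auto dest: pos_inj)
    then show ?thesis by (simp add: h_def)
  qed
  have hinj: "inj h"
  proof (rule injI)
    fix c c' assume "h c = h c'"
    then have "c j = c' j" for j using hpos by metis
    then show "c = c'" by blast
  qed
  have hsub: "range h \<subseteq> {x \<in> U. g L n x = g L n \<alpha>}"
  proof
    fix y assume "y \<in> range h"
    then obtain c where y: "y = h c" by blast
    have "i \<notin> range pos" if "i < N" for i using pos_big that by (metis imageE less_asym)
    then have "y \<in> cyl \<alpha> N" unfolding cyl_def y h_def by auto
    then have "y \<in> U" using N by blast
    moreover have "g L n y = g L n \<alpha>"
    proof
      fix k
      have "theta_n L n k \<noteq> pos j" for j using theta_n_free[of L n k "N + j"] by (simp add: pos_def)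
      then have "theta_n L n k \<notin> range pos" by blast
      then show "g L n y k = g L n \<alpha> k" by (simp add: g_def y h_def)
    qed
    ultimately show "y \<in> {x \<in> U. g L n x = g L n \<alpha>}" by blast
  qed
  have "countable (range h)" using ct countable_subset[OF hsub] by blast
  then have "countable (UNIV :: (nat \<Rightarrow> bool) set)" using countable_image_inj_on hinj by blast
  then show False using uncountable_fun by simp
qed

theorem partA: "strongly_complex_situation cantor (D L) (g L)"
  unfolding strongly_complex_situation_def
proof (intro conjI allI impI)
  show "topspace cantor \<noteq> {}" by simp
  show "cantor dim_le 0" by (rule cantor_dim0)
  show "perfect_top cantor" by (rule cantor_perfect)
  show "Polish_space cantor" by (rule cantor_polish)
  show "partial_cont_open_map cantor (D L n) (g L n)" for n by (rule g_pcom)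
  show "(\<lambda>x. (x, x)) ` topspace cantor \<subseteq>
      prod_topology cantor cantor closure_of (\<Union>n. graph_on (D L n) (g L n)) - (\<Union>n. graph_on (D L n) (g L n))"
    using diag_close not_in_graph by blast
  show "\<not> (\<forall>y. countable {x \<in> U. g L n x = y})" if "openin cantor U \<and> U \<noteq> {} \<and> U \<subseteq> D L n" for n U
    using not_ctbl that by blast
qed


theorem lemma5p2:
  fixes L :: nat
  assumes "L \<ge> 1"
  shows "strongly_complex_situation cantor (D L) (g L) \<and>
    (\<forall>s \<alpha>. sorted_wrt (<) s \<and> 2 \<le> length s \<and> length s \<le> L \<and>
           \<alpha> \<in> D L (last s) \<and> g_seq L s \<alpha> \<noteq> None \<and> g_seq L (butlast s) \<alpha> \<noteq> None \<longrightarrow>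
           g_seq L s \<alpha> \<noteq> g_seq L (butlast s) \<alpha>) \<and>
    (\<forall>s \<alpha>. sorted_wrt (<) s \<and> length s = L + 1 \<and>
           g_seq L s \<alpha> \<noteq> None \<and> g_seq L (butlast s) \<alpha> \<noteq> None \<longrightarrow>
           g_seq L s \<alpha> = g_seq L (butlast s) \<alpha>)"
  using partA[of L] partB[OF assms] partC[OF assms] by blast

end
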